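(* Let $r\ge2$ be an integer, let $f\in C_p(\mathbb{R})$, let $n\in\mathbb{N}_0$, $k\in\{0,1,\dots,r^n-1\}$, $y\in(0,1)$ and $t\in(0,\infty)$. Then $$q_f\Big(t,x;\tfrac{k+y}{r^n}\Big)\ge \min\Big\{q_f\Big(t,x;\tfrac{k}{r^n}\Big),\,q_f\Big(t,x;\tfrac{k+1}{r^n}\Big)\Big\}\quad\text{for all }x\in\mathbb{R}$$ holds if and only if $\Delta_{n,k}(y;f)\le -\frac1t$.
   Context: $C_p(\mathbb{R})$ denotes the set of all continuous functions $f:\mathbb{R}\to\mathbb{R}$ periodic with period $1$ with $f(0)=0$; $\mathbb{N}_0=\mathbb{N}\cup\{0\}$. For $f\in C_p(\mathbb{R})$, $q_f(t,x;z)=f(z)+\frac{1}{2t}(x-z)^2$ for $(t,x,z)\in(0,\infty)\times\mathbb{R}\times\mathbb{R}$. For $(n,k,y)\in\mathbb{N}_0\times\mathbb{Z}\times(0,1)$, $\delta^+_{n,k}(y;f)=\dfrac{f(\frac{k+1}{r^n})-f(\frac{k+y}{r^n})}{\frac{1-y}{r^n}}$, $\delta^-_{n,k}(y;f)=\dfrac{f(\frac{k+y}{r^n})-f(\frac{k}{r^n})}{\frac{y}{r^n}}$, and $\Delta_{n,k}(y;f)=2r^n\big(\delta^+_{n,k}(y;f)-\delta^-_{n,k}(y;f)\big)$. *)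

theory Defs
  imports Complex_Main
begin

definition Cp :: "(real \<Rightarrow> real) set" where
  "Cp = {f. continuous_on UNIV f \<and> (\<forall>x. f (x + 1) = f x) \<and> f 0 = 0}"

definition q :: "(real \<Rightarrow> real) \<Rightarrow> real \<Rightarrow> real \<Rightarrow> real \<Rightarrow> real" where
  "q f t x z = f z + (x - z)^2 / (2 * t)"

definition delta_plus :: "nat \<Rightarrow> (real \<Rightarrow> real) \<Rightarrow> nat \<Rightarrow> int \<Rightarrow> real \<Rightarrow> real" where
  "delta_plus r f n k y =
     (f ((of_int k + 1) / real r ^ n) - f ((of_int k + y) / real r ^ n)) / ((1 - y) / real r ^ n)"

definition delta_minus :: "nat \<Rightarrow> (real \<Rightarrow> real) \<Rightarrow> nat \<Rightarrow> int \<Rightarrow> real \<Rightarrow> real" where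
  "delta_minus r f n k y =
     (f ((of_int k + y) / real r ^ n) - f (of_int k / real r ^ n)) / (y / real r ^ n)"

definition Delta :: "nat \<Rightarrow> (real \<Rightarrow> real) \<Rightarrow> nat \<Rightarrow> int \<Rightarrow> real \<Rightarrow> real" where
  "Delta r f n k y = 2 * real r ^ n * (delta_plus r f n k y - delta_minus r f n k y)"

end

theory Submission
  imports Defs
begin

lemma key_lines:
  fixes P Q :: real
  shows "(\<forall>X::real. 2*X \<le> P \<or> 2*X \<ge> Q) \<longleftrightarrow> Q \<le> P"
proof
  assume h: "\<forall>X::real. 2*X \<le> P \<or> 2*X \<ge> Q"
  show "Q \<le> P"
  proof (rule ccontr)
    assume "\<not> Q \<le> P"
    with h[rule_format, of "(P+Q)/4"] show False by auto
  qed
qed auto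

lemma key:
  fixes a u y t A B C :: real
  assumes u: "u > 0" and y: "0 < y" "y < 1" and t: "t > 0"
  shows "(\<forall>x. C + (x-(a+y*u))^2/(2*t) \<ge> min (A + (x-a)^2/(2*t)) (B + (x-(a+u))^2/(2*t)))
     \<longleftrightarrow> 2/u * ((B-C)/((1-y)*u) - (C-A)/(y*u)) \<le> -1/t"
proof -
  define s where "s = y*u"
  define p where "p = (1-y)*u"
  have s: "s > 0" using u y by (simp add: s_def)
  have p: "p > 0" using u y by (simp add: p_def)
  have us: "u = s + p" by (simp add: s_def p_def algebra_simps)
  define d1 where "d1 = (C-A)/s"
  define d2 where "d2 = (B-C)/p"
  have CA: "C - A = s*d1" using s by (simp add: d1_def)
  have BC: "B - C = p*d2" using p by (simp add: d2_def)
  have e1: "C + (x-(a+y*u))^2/(2*t) \<ge> A + (x-a)^2/(2*t) \<longleftrightarrow> 2*(x-a) \<le> 2*t*d1 + s" for x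
  proof -
    have "C + (x-(a+y*u))^2/(2*t) - (A + (x-a)^2/(2*t)) = s*(2*t*d1 + s - 2*(x-a))/(2*t)"
      using t CA unfolding s_def[symmetric] by (simp add: field_simps power2_eq_square)
    moreover have "s*(2*t*d1 + s - 2*(x-a))/(2*t) \<ge> 0 \<longleftrightarrow> 2*t*d1 + s - 2*(x-a) \<ge> 0"
      using s t by (simp add: zero_le_divide_iff zero_le_mult_iff)
    ultimately show ?thesis by linarith
  qed
  have e2: "C + (x-(a+y*u))^2/(2*t) \<ge> B + (x-(a+u))^2/(2*t) \<longleftrightarrow> 2*(x-a) \<ge> 2*t*d2 + u + s" for x
  proof -
    have "C + (x-(a+y*u))^2/(2*t) - (B + (x-(a+u))^2/(2*t)) = p*(2*(x-a) - 2*t*d2 - u - s)/(2*t)"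
      using t BC us unfolding s_def[symmetric] by (simp add: field_simps power2_eq_square)
    moreover have "p*(2*(x-a) - 2*t*d2 - u - s)/(2*t) \<ge> 0 \<longleftrightarrow> 2*(x-a) - 2*t*d2 - u - s \<ge> 0"
      using p t by (simp add: zero_le_divide_iff zero_le_mult_iff)
    ultimately show ?thesis by linarith
  qed
  have "(\<forall>x. C + (x-(a+y*u))^2/(2*t) \<ge> min (A + (x-a)^2/(2*t)) (B + (x-(a+u))^2/(2*t)))
     \<longleftrightarrow> (\<forall>x. 2*(x-a) \<le> 2*t*d1 + s \<or> 2*(x-a) \<ge> 2*t*d2 + u + s)"
    using e1 e2 by (simp add: min_le_iff_disj)
  also have "\<dots> \<longleftrightarrow> (\<forall>X::real. 2*X \<le> 2*t*d1 + s \<or> 2*X \<ge> 2*t*d2 + u + s)"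
  proof
    assume h: "\<forall>x. 2*(x-a) \<le> 2*t*d1 + s \<or> 2*(x-a) \<ge> 2*t*d2 + u + s"
    show "\<forall>X::real. 2*X \<le> 2*t*d1 + s \<or> 2*X \<ge> 2*t*d2 + u + s"
    proof
      fix X :: real show "2*X \<le> 2*t*d1 + s \<or> 2*X \<ge> 2*t*d2 + u + s"
        using h[rule_format, of "X + a"] by simp
    qed
  next
    assume h: "\<forall>X::real. 2*X \<le> 2*t*d1 + s \<or> 2*X \<ge> 2*t*d2 + u + s"
    show "\<forall>x. 2*(x-a) \<le> 2*t*d1 + s \<or> 2*(x-a) \<ge> 2*t*d2 + u + s"
    proof
      fix x :: real show "2*(x-a) \<le> 2*t*d1 + s \<or> 2*(x-a) \<ge> 2*t*d2 + u + s"
        using h[rule_format, of "x - a"] by simp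
    qed
  qed
  also have "\<dots> \<longleftrightarrow> 2*t*d2 + u + s \<le> 2*t*d1 + s" by (rule key_lines)
  also have "\<dots> \<longleftrightarrow> 2/u * (d2 - d1) \<le> -1/t"
  proof -
    have ut: "u*t > 0" using u t by simp
    have "2/u * (d2 - d1) \<le> -1/t \<longleftrightarrow> (2/u * (d2 - d1)) * (u*t) \<le> (-1/t) * (u*t)"
      by (rule mult_le_cancel_right_pos[OF ut, symmetric])
    moreover have "(2/u * (d2 - d1)) * (u*t) = 2*t*(d2-d1)" using u by (simp add: field_simps)
    moreover have "(-1/t) * (u*t) = -u" using t by (simp add: field_simps)
    ultimately have "2/u * (d2 - d1) \<le> -1/t \<longleftrightarrow> 2*t*(d2-d1) \<le> -u" by simp
    then show ?thesis by (simp add: algebra_simps)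
  qed
  finally show ?thesis by (simp add: d1_def d2_def s_def p_def)
qed

theorem proposition2p2:
  fixes r n :: nat and k :: int and f :: "real \<Rightarrow> real" and y t :: real
  assumes "r \<ge> 2" and "f \<in> Cp" and "0 \<le> k" and "k \<le> int (r ^ n) - 1"
    and "0 < y" and "y < 1" and "0 < t"
  shows "(\<forall>x::real. q f t x ((of_int k + y) / real r ^ n)
            \<ge> min (q f t x (of_int k / real r ^ n)) (q f t x ((of_int k + 1) / real r ^ n)))
         \<longleftrightarrow> Delta r f n k y \<le> - 1 / t"
proof -
  define R where "R = real r ^ n"
  have R: "R > 0" using assms(1) by (simp add: R_def)
  define u where "u = 1/R"
  define a where "a = of_int k / R"
  have u: "u > 0" using R by (simp add: u_def)
  have c1: "(of_int k + y) / R = a + y*u" by (simp add: a_def u_def add_divide_distrib)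
  have c2: "(of_int k + 1) / R = a + u" by (simp add: a_def u_def add_divide_distrib)
  have D: "Delta r f n k y = 2/u * ((f (a+u) - f (a+y*u))/((1-y)*u) - (f (a+y*u) - f a)/(y*u))"
    unfolding Delta_def delta_plus_def delta_minus_def R_def[symmetric] c1 c2
    by (simp add: u_def a_def[symmetric] divide_divide_eq_left')
  show ?thesis
    unfolding q_def R_def[symmetric] c1 c2 D a_def[symmetric]
    by (rule key[OF u assms(5,6,7)])
qed

end
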